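(* Let $\mathcal{F}=\{B_1,\dots,B_t\}$ be a $(G,[k_1,\dots,k_t],\lambda)$ Hadamard partitioned difference family, assume $G$ has a subgroup $H$ of index $2$, and set $s_i=|B_i\cap H|$ for $i=1,\dots,t$. Then $$s_1+\cdots+s_t=\lambda\qquad\text{and}\qquad 2s_1(k_1-s_1)+\cdots+2s_t(k_t-s_t)=\lambda^2.$$
   Context: $G$ is a finite group written additively, with difference $x-y:=x+(-y)$. For $B\subseteq G$, $\Delta B$ is the multiset $\{x-y: x,y\in B, x\neq y\}$; for $\mathcal{F}=\{B_1,\dots,B_t\}$, $\Delta\mathcal{F}$ is the multiset union of the $\Delta B_i$. $\mathcal{F}$ is a $(G,[k_1,\dots,k_t],\lambda)$ partitioned difference family if the $B_i$ partition $G$, $|B_i|=k_i$, and $\Delta\mathcal{F}$ contains every non-zero element of $G$ exactly $\lambda$ times; it is Hadamard if $|G|=2\lambda$. *)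

theory Defs
  imports Main
begin

text \<open>A finite group written additively is modelled as a type of class group_add
(not necessarily commutative) with finite universe. A family B_0,...,B_(t-1)
is indexed by i < t.\<close>

text \<open>Multiplicity of d in the multiset Delta B = {x - y : x,y in B, x ~= y}.\<close>
definition diff_mult :: "'g::group_add set \<Rightarrow> 'g \<Rightarrow> nat" where
  "diff_mult B d = card {(x, y). x \<in> B \<and> y \<in> B \<and> x \<noteq> y \<and> x - y = d}"

definition is_PDF :: "nat \<Rightarrow> (nat \<Rightarrow> 'g::{group_add,finite} set) \<Rightarrow> (nat \<Rightarrow> nat) \<Rightarrow> nat \<Rightarrow> bool" where
  "is_PDF t B k lam \<longleftrightarrow>
     (\<forall>i<t. B i \<noteq> {}) \<and>
     (\<forall>i<t. \<forall>j<t. i \<noteq> j \<longrightarrow> B i \<inter> B j = {}) \<and>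
     (\<Union>i<t. B i) = UNIV \<and>
     (\<forall>i<t. card (B i) = k i) \<and>
     (\<forall>d. d \<noteq> 0 \<longrightarrow> (\<Sum>i<t. diff_mult (B i) d) = lam)"

definition is_Hadamard_PDF :: "nat \<Rightarrow> (nat \<Rightarrow> 'g::{group_add,finite} set) \<Rightarrow> (nat \<Rightarrow> nat) \<Rightarrow> nat \<Rightarrow> bool" where
  "is_Hadamard_PDF t B k lam \<longleftrightarrow> is_PDF t B k lam \<and> card (UNIV :: 'g set) = 2 * lam"

definition add_subgroup :: "'g::group_add set \<Rightarrow> bool" where
  "add_subgroup H \<longleftrightarrow> 0 \<in> H \<and> (\<forall>x\<in>H. \<forall>y\<in>H. x + y \<in> H) \<and> (\<forall>x\<in>H. - x \<in> H)"

definition index_two_subgroup :: "'g::{group_add,finite} set \<Rightarrow> bool" where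
  "index_two_subgroup H \<longleftrightarrow> add_subgroup H \<and> card (UNIV :: 'g set) = 2 * card H"

end

theory Submission
  imports Defs
begin

lemma coset_cover:
  fixes H :: "'g::{group_add,finite} set"
  assumes "index_two_subgroup H" "x \<notin> H"
  shows "(\<lambda>h. h + x) ` H = UNIV - H"
proof -
  have sg: "add_subgroup H" and c: "card (UNIV::'g set) = 2 * card H"
    using assms(1) unfolding index_two_subgroup_def by auto
  have disj: "(\<lambda>h. h + x) ` H \<inter> H = {}"
  proof (rule ccontr)
    assume "(\<lambda>h. h + x) ` H \<inter> H \<noteq> {}"
    then obtain h where h: "h \<in> H" "h + x \<in> H" by auto
    have "- h + (h + x) \<in> H" using sg h unfolding add_subgroup_def by blast
    then have "x \<in> H" by (simp add: add.assoc[symmetric])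
    with assms(2) show False by simp
  qed
  have ci: "card ((\<lambda>h. h + x) ` H) = card H"
    by (rule card_image) (simp add: inj_on_def)
  have "card (UNIV - H) = card H" using c
    by (simp add: card_Diff_subset)
  moreover have "(\<lambda>h. h + x) ` H \<subseteq> UNIV - H" using disj by auto
  ultimately show ?thesis using ci
    by (metis card_subset_eq finite)
qed

lemma diff_in_H:
  fixes H :: "'g::{group_add,finite} set"
  assumes "index_two_subgroup H"
  shows "(x - y \<in> H) \<longleftrightarrow> (x \<in> H \<longleftrightarrow> y \<in> H)"
proof -
  have sg: "\<And>a b. a \<in> H \<Longrightarrow> b \<in> H \<Longrightarrow> a + b \<in> H" "\<And>a. a \<in> H \<Longrightarrow> - a \<in> H"
    using assms unfolding index_two_subgroup_def add_subgroup_def by auto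
  show ?thesis
  proof (cases "x \<in> H")
    case True
    show ?thesis
    proof (cases "y \<in> H")
      case True
      have "x + - y \<in> H" by (rule sg(1)[OF \<open>x \<in> H\<close> sg(2)[OF True]])
      then have "x - y \<in> H" by (simp only: diff_conv_add_uminus)
      then show ?thesis using \<open>x \<in> H\<close> True by blast
    next
      case False
      have "x - y \<notin> H"
      proof
        assume "x - y \<in> H"
        then have "- (x - y) + x \<in> H" by (rule sg(1)[OF sg(2) \<open>x \<in> H\<close>])
        moreover have "- (x - y) + x = y" by (simp only: minus_diff_eq diff_add_cancel)
        ultimately show False using False by simp
      qed
      then show ?thesis using True False by blast
    qed
  next
    case False
    show ?thesis
    proof (cases "y \<in> H")
      case True
      have "x - y \<notin> H"
      proof
        assume "x - y \<in> H"
        then have "(x - y) + y \<in> H" by (rule sg(1)[OF _ True])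
        then show False using False by (simp only: diff_add_cancel)
      qed
      then show ?thesis using True False by blast
    next
      case yn: False
      have "y \<in> (\<lambda>h. h + x) ` H" using coset_cover[OF assms False] yn by auto
      then obtain h where h: "h \<in> H" "y = h + x" by auto
      have "x - y = - h" unfolding h(2) by (simp only: diff_conv_add_uminus minus_add add_minus_cancel)
      then have "x - y \<in> H" using sg(2)[OF h(1)] by simp
      then show ?thesis using False yn by blast
    qed
  qed
qed

lemma block_count:
  fixes H :: "'g::{group_add,finite} set"
  assumes "index_two_subgroup H"
  shows "(\<Sum>d\<in>UNIV - H. diff_mult S d) = 2 * card (S \<inter> H) * (card S - card (S \<inter> H))"
proof -
  let ?A = "{(x, y). x \<in> S \<and> y \<in> S \<and> x \<noteq> y \<and> x - y \<notin> H}"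
  have "(\<Sum>d\<in>UNIV - H. diff_mult S d) = (\<Sum>d\<in>UNIV - H. card {p \<in> ?A. (\<lambda>(x,y). x - y) p = d})"
    unfolding diff_mult_def by (intro sum.cong refl arg_cong[where f=card]) auto
  also have "\<dots> = card ?A"
  proof -
    have im: "(\<lambda>(x,y). x - y) ` ?A \<subseteq> UNIV - H" by auto
    have "(\<Sum>d\<in>UNIV - H. \<Sum>p\<in>{p \<in> ?A. (\<lambda>(x,y). x - y) p = d}. (1::nat)) = (\<Sum>p\<in>?A. 1)"
      by (rule sum.group[OF finite finite im])
    then show ?thesis by simp
  qed
  also have "?A = (S \<inter> H) \<times> (S - H) \<union> (S - H) \<times> (S \<inter> H)"
    using diff_in_H[OF assms] by auto
  also have "card \<dots> = card ((S \<inter> H) \<times> (S - H)) + card ((S - H) \<times> (S \<inter> H))"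
    by (rule card_Un_disjoint) auto
  also have "\<dots> = 2 * card (S \<inter> H) * (card S - card (S \<inter> H))"
    by (simp add: card_cartesian_product card_Diff_subset_Int Int_commute)
  finally show ?thesis .
qed

theorem proposition5p1:
  fixes t :: nat and B :: "nat \<Rightarrow> 'g::{group_add,finite} set"
    and k :: "nat \<Rightarrow> nat" and lam :: nat and H :: "'g set"
  assumes "is_Hadamard_PDF t B k lam"
    and "index_two_subgroup H"
  shows "(\<Sum>i<t. card (B i \<inter> H)) = lam
       \<and> (\<Sum>i<t. 2 * card (B i \<inter> H) * (k i - card (B i \<inter> H))) = lam^2"
proof -
  have dis: "\<forall>i<t. \<forall>j<t. i \<noteq> j \<longrightarrow> B i \<inter> B j = {}"
    and un: "(\<Union>i<t. B i) = UNIV" and kk: "\<forall>i<t. card (B i) = k i"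
    and lamd: "\<And>d. d \<noteq> 0 \<Longrightarrow> (\<Sum>i<t. diff_mult (B i) d) = lam"
    and cG: "card (UNIV :: 'g set) = 2 * lam"
    using assms(1) unfolding is_Hadamard_PDF_def is_PDF_def by auto
  have cH: "card H = lam" and H0: "0 \<in> H"
    using assms(2) cG unfolding index_two_subgroup_def add_subgroup_def by auto
  have "(\<Sum>i<t. card (B i \<inter> H)) = card (\<Union>i<t. B i \<inter> H)"
    by (rule card_UN_disjoint[symmetric]) (use dis in auto)
  also have "(\<Union>i<t. B i \<inter> H) = H" using un by auto
  finally have 1: "(\<Sum>i<t. card (B i \<inter> H)) = lam" using cH by simp
  have "(\<Sum>i<t. 2 * card (B i \<inter> H) * (k i - card (B i \<inter> H)))
      = (\<Sum>i<t. \<Sum>d\<in>UNIV - H. diff_mult (B i) d)"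
    using block_count[OF assms(2)] kk by (intro sum.cong) auto
  also have "\<dots> = (\<Sum>d\<in>UNIV - H. \<Sum>i<t. diff_mult (B i) d)" by (rule sum.swap)
  also have "\<dots> = (\<Sum>d\<in>UNIV - H. lam)"
    by (intro sum.cong refl lamd) (use H0 in auto)
  also have "\<dots> = lam * lam" using cG cH by (simp add: card_Diff_subset)
  finally show ?thesis using 1 by (simp add: power2_eq_square)
qed

end
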